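(* Let $n$ be a positive integer and let $\mathscr{R}$ be a type $I_n$ von Neumann algebra with center $\mathscr{C}$. A unitary $U \in \mathscr{R}$ can be written as a product $U = R_1R_2R_3R_4$ of four symmetries (self-adjoint unitaries) $R_1,R_2,R_3,R_4 \in \mathscr{R}$ if and only if $\det_c(U)$ is a symmetry in $\mathscr{C}$.
   Context: Since $\mathscr{R}$ is of type $I_n$, $\mathscr{R} \cong M_n(\mathscr{C})$, and $\mathscr{C} \cong C(X)$ for a hyperstonean compact space $X$, so $\mathscr{R} \cong M_n(C(X)) \cong C(X; M_n(\mathbb{C}))$, the algebra of continuous $M_n(\mathbb{C})$-valued functions on $X$. The center-valued determinant $\det_c : \mathscr{R} \to \mathscr{C}$ is defined by $\det_c(f) = \det \circ f \in C(X)$ for $f \in C(X; M_n(\mathbb{C}))$, where $\det$ is the usual determinant on $M_n(\mathbb{C})$; equivalently, for $f=(f_{jk}) \in M_n(C(X))$, $\det_c(f)(x) = \sum_{\sigma \in S_n} \mathrm{sgn}(\sigma)\prod_{j=1}^n f_{j\sigma(j)}(x)$. A symmetry is a self-adjoint unitary. *)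

theory Defs
  imports "HOL-Analysis.Analysis"
begin

definition extremally_disconnected :: "'a topology \<Rightarrow> bool" where
  "extremally_disconnected X \<longleftrightarrow>
     (\<forall>U. openin X U \<longrightarrow> openin X (X closure_of U))"

definition stonean_space :: "'a topology \<Rightarrow> bool" where
  "stonean_space X \<longleftrightarrow> compact_space X \<and> Hausdorff_space X \<and> extremally_disconnected X"

definition borel_sets_of :: "'a topology \<Rightarrow> 'a set set" where
  "borel_sets_of X = sigma_sets (topspace X) {U. openin X U}"

definition radon_measure_on :: "'a topology \<Rightarrow> 'a measure \<Rightarrow> bool" where
  "radon_measure_on X M \<longleftrightarrow>
     space M = topspace X \<and> sets M = borel_sets_of X \<and>
     emeasure M (space M) < \<infinity> \<and>
     (\<forall>B\<in>sets M. emeasure M B =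
        (SUP K\<in>{K. compactin X K \<and> K \<subseteq> B}. emeasure M K))"

definition normal_measure_on :: "'a topology \<Rightarrow> 'a measure \<Rightarrow> bool" where
  "normal_measure_on X M \<longleftrightarrow> radon_measure_on X M \<and>
     (\<forall>N\<in>sets M. X interior_of (X closure_of N) = {} \<longrightarrow> emeasure M N = 0)"

text \<open>Hyperstonean: Stonean, and the supports of normal measures are dense
  (every nonempty open set has positive measure for some normal measure).\<close>
definition hyperstonean :: "'a topology \<Rightarrow> bool" where
  "hyperstonean X \<longleftrightarrow> stonean_space X \<and>
     (\<forall>U. openin X U \<and> U \<noteq> {} \<longrightarrow>
        (\<exists>M. normal_measure_on X M \<and> emeasure M U > 0))"

definition mat_adjoint :: "complex^'n^'n \<Rightarrow> complex^'n^'n" where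
  "mat_adjoint A = (\<chi> i j. cnj (A $ j $ i))"

definition mat_unitary :: "complex^'n^'n \<Rightarrow> bool" where
  "mat_unitary A \<longleftrightarrow> A ** mat_adjoint A = mat 1 \<and> mat_adjoint A ** A = mat 1"

definition mat_symmetry :: "complex^'n^'n \<Rightarrow> bool" where
  "mat_symmetry A \<longleftrightarrow> mat_adjoint A = A \<and> mat_unitary A"

text \<open>Elements of C(X; M_n(C)) are continuous functions on topspace X
  (values outside topspace X are irrelevant).\<close>
definition cont_mat_fun :: "'a topology \<Rightarrow> ('a \<Rightarrow> complex^'n^'n) \<Rightarrow> bool" where
  "cont_mat_fun X f \<longleftrightarrow> continuous_map X euclidean f"

definition unitary_in :: "'a topology \<Rightarrow> ('a \<Rightarrow> complex^'n^'n) \<Rightarrow> bool" where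
  "unitary_in X U \<longleftrightarrow> cont_mat_fun X U \<and> (\<forall>x\<in>topspace X. mat_unitary (U x))"

definition symmetry_in :: "'a topology \<Rightarrow> ('a \<Rightarrow> complex^'n^'n) \<Rightarrow> bool" where
  "symmetry_in X R \<longleftrightarrow> cont_mat_fun X R \<and> (\<forall>x\<in>topspace X. mat_symmetry (R x))"

definition det_c :: "('a \<Rightarrow> complex^'n^'n) \<Rightarrow> 'a \<Rightarrow> complex" where
  "det_c f = (\<lambda>x. det (f x))"

definition center_symmetry :: "'a topology \<Rightarrow> ('a \<Rightarrow> complex) \<Rightarrow> bool" where
  "center_symmetry X g \<longleftrightarrow> continuous_map X euclidean g \<and>
     (\<forall>x\<in>topspace X. cnj (g x) = g x \<and> g x * cnj (g x) = 1)"

end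

theory Submission
  imports Defs
begin


definition cinner :: "complex^'n \<Rightarrow> complex^'n \<Rightarrow> complex" where
  "cinner x y = (\<Sum>i\<in>UNIV. x$i * cnj (y$i))"

lemma cinner_add_left: "cinner (x + y) z = cinner x z + cinner y z"
  unfolding cinner_def by (simp add: distrib_right sum.distrib)
lemma cinner_add_right: "cinner z (x + y) = cinner z x + cinner z y"
  unfolding cinner_def by (simp add: distrib_left sum.distrib)
lemma cinner_diff_left: "cinner (x - y) z = cinner x z - cinner y z"
  unfolding cinner_def by (simp add: left_diff_distrib sum_subtractf)
lemma cinner_diff_right: "cinner z (x - y) = cinner z x - cinner z y"
  unfolding cinner_def by (simp add: right_diff_distrib sum_subtractf)
lemma cinner_scale_left: "cinner (c *s x) y = c * cinner x y"
  unfolding cinner_def by (simp add: sum_distrib_left mult.assoc)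
lemma cinner_scale_right: "cinner x (c *s y) = cnj c * cinner x y"
  unfolding cinner_def by (simp add: sum_distrib_left mult.assoc mult.left_commute)
lemma cinner_zero_left[simp]: "cinner 0 y = 0"
  unfolding cinner_def by simp
lemma cinner_zero_right[simp]: "cinner x 0 = 0"
  unfolding cinner_def by simp
lemma cinner_commute: "cinner y x = cnj (cinner x y)"
  unfolding cinner_def by (simp add: mult.commute)

lemma norm_vec_sq: "(norm (x::complex^'n))^2 = (\<Sum>i\<in>UNIV. (cmod (x$i))^2)"
  unfolding norm_vec_def L2_set_def by (simp add: sum_nonneg)

lemma cinner_self: "cinner x x = complex_of_real ((norm x)^2)"
proof -
  have "cinner x x = (\<Sum>i\<in>UNIV. complex_of_real ((cmod (x$i))^2))"
    unfolding cinner_def by (simp only: complex_norm_square)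
  also have "\<dots> = complex_of_real ((norm x)^2)"
    unfolding norm_vec_sq of_real_sum ..
  finally show ?thesis .
qed

lemma cinner_self_eq_0: "cinner x x = 0 \<longleftrightarrow> x = 0"
  unfolding cinner_self by simp

lemma mat_adjoint_nth[simp]: "mat_adjoint A $ i $ j = cnj (A $ j $ i)"
  unfolding mat_adjoint_def by simp

lemma mat_adjoint_adjoint[simp]: "mat_adjoint (mat_adjoint A) = A"
  by (simp add: vec_eq_iff)

lemma cinner_adjoint: "cinner (A *v x) y = cinner x (mat_adjoint A *v y)"
proof -
  have "cinner (A *v x) y = (\<Sum>i\<in>UNIV. \<Sum>j\<in>UNIV. A$i$j * x$j * cnj (y$i))"
    unfolding cinner_def matrix_vector_mult_def by (simp add: sum_distrib_right)
  also have "\<dots> = (\<Sum>j\<in>UNIV. \<Sum>i\<in>UNIV. A$i$j * x$j * cnj (y$i))"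
    by (rule sum.swap)
  also have "\<dots> = cinner x (mat_adjoint A *v y)"
    unfolding cinner_def matrix_vector_mult_def by (simp add: sum_distrib_left mult_ac)
  finally show ?thesis .
qed

lemma cinner_adjoint': "cinner x (A *v y) = cinner (mat_adjoint A *v x) y"
  by (metis cinner_adjoint mat_adjoint_adjoint)

lemma mat_adjoint_mult: "mat_adjoint (A ** B) = mat_adjoint B ** mat_adjoint A"
  by (simp add: vec_eq_iff matrix_matrix_mult_def mult.commute)

lemma mat_adjoint_add: "mat_adjoint (A + B) = mat_adjoint A + mat_adjoint B"
  by (simp add: vec_eq_iff)

lemma mat_adjoint_diff: "mat_adjoint (A - B) = mat_adjoint A - mat_adjoint B"
  by (simp add: vec_eq_iff)

lemma mat_adjoint_mat[simp]: "mat_adjoint (mat c) = mat (cnj c)"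
  by (simp add: vec_eq_iff mat_def)

lemma unitary_adjoint: "mat_unitary U \<Longrightarrow> mat_unitary (mat_adjoint U)"
  unfolding mat_unitary_def by simp

lemma unitary_mult: "mat_unitary U \<Longrightarrow> mat_unitary V \<Longrightarrow> mat_unitary (U ** V)"
  unfolding mat_unitary_def mat_adjoint_mult
  by (metis matrix_mul_assoc matrix_mul_rid)

lemma unitary_left: "mat_unitary U \<Longrightarrow> mat_adjoint U *v (U *v x) = x"
  unfolding mat_unitary_def by (simp add: matrix_vector_mul_assoc)

lemma unitary_right: "mat_unitary U \<Longrightarrow> U *v (mat_adjoint U *v x) = x"
  unfolding mat_unitary_def by (simp add: matrix_vector_mul_assoc)

lemma unitary_cinner: "mat_unitary U \<Longrightarrow> cinner (U *v x) (U *v y) = cinner x y"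
  by (simp add: cinner_adjoint unitary_left)

lemma mv_scale: "(A::complex^'n^'m) *v (c *s x) = c *s (A *v x)"
  by (simp add: vec_eq_iff matrix_vector_mult_def sum_distrib_left mult.left_commute)

lemma mv_add: "(A::complex^'n^'m) *v (x + y) = A *v x + A *v y"
  by (simp add: vec_eq_iff matrix_vector_mult_def sum.distrib distrib_left)

lemma mv_diff: "(A::complex^'n^'m) *v (x - y) = A *v x - A *v y"
  by (simp add: vec_eq_iff matrix_vector_mult_def algebra_simps sum_subtractf)

lemma mv_add_mat: "((A::complex^'n^'m) + B) *v x = A *v x + B *v x"
  by (simp add: vec_eq_iff matrix_vector_mult_def sum.distrib distrib_right)

lemma mv_diff_mat: "((A::complex^'n^'m) - B) *v x = A *v x - B *v x"
  by (simp add: vec_eq_iff matrix_vector_mult_def algebra_simps sum_subtractf)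

lemma cont_cinner_quad: "continuous_on S (\<lambda>x::complex^'n. Re (cinner (H *v x) x))"
  unfolding cinner_def matrix_vector_mult_def by (intro continuous_intros)


lemma norm_scale_vec: "norm (c *s (x::complex^'n)) = cmod c * norm x"
proof -
  have "(norm (c *s x))^2 = (cmod c * norm x)^2"
    unfolding norm_vec_sq power_mult_distrib sum_distrib_left
    by (simp add: norm_mult power_mult_distrib)
  then show ?thesis by (simp add: power2_eq_iff_nonneg)
qed

lemma real_small_contra:
  fixes N Q :: real
  assumes N: "N > 0" and h: "\<And>e. e > 0 \<Longrightarrow> 0 \<le> - 2 * e * N + e^2 * Q"
  shows False
proof -
  define e where "e = N / (\<bar>Q\<bar> + 1)"
  have e: "e > 0" unfolding e_def using N by (simp add: add_pos_nonneg)
  have "e * \<bar>Q\<bar> < N"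
  proof -
    have "e * \<bar>Q\<bar> = N * (\<bar>Q\<bar> / (\<bar>Q\<bar> + 1))" unfolding e_def by simp
    also have "\<dots> < N * 1"
      using N by (intro mult_strict_left_mono) auto
    finally show ?thesis by simp
  qed
  have a1: "e^2 * Q \<le> e^2 * \<bar>Q\<bar>" by (intro mult_left_mono) auto
  have a2: "e^2 * \<bar>Q\<bar> = e * (e * \<bar>Q\<bar>)" by (simp add: power2_eq_square)
  have a3: "e * (e * \<bar>Q\<bar>) < e * N" using mult_strict_left_mono[OF \<open>e * \<bar>Q\<bar> < N\<close> e] .
  have a4: "e * N > 0" using e N by simp
  have "0 \<le> - 2 * e * N + e^2 * Q" using h e by blast
  then show False using a1 a2 a3 a4 by linarith
qed

lemma var_eigen:
  fixes H :: "complex^'n^'n" and V :: "(complex^'n) set"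
  assumes herm: "mat_adjoint H = H"
    and closedV: "closed V"
    and add: "\<And>x y. x \<in> V \<Longrightarrow> y \<in> V \<Longrightarrow> x + y \<in> V"
    and scal: "\<And>x c. x \<in> V \<Longrightarrow> c *s x \<in> V"
    and inv: "\<And>x. x \<in> V \<Longrightarrow> H *v x \<in> V"
    and v: "v \<in> V" "v \<noteq> 0"
  shows "\<exists>x\<in>V. x \<noteq> 0 \<and> (\<exists>a::real. H *v x = of_real a *s x)"
proof -
  let ?f = "\<lambda>x. Re (cinner (H *v x) x)"
  let ?S = "V \<inter> sphere 0 1"
  have cS: "compact ?S" using closedV by (simp add: closed_Int_compact)
  define u where "u = complex_of_real (1 / norm v) *s v"
  have "u \<in> ?S" unfolding u_def using v scal by (simp add: norm_scale_vec norm_divide)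
  then have neS: "?S \<noteq> {}" by blast
  obtain x0 where x0: "x0 \<in> ?S" and x0max: "\<And>y. y \<in> ?S \<Longrightarrow> ?f y \<le> ?f x0"
    using continuous_attains_sup[OF cS neS cont_cinner_quad[of ?S H]] by blast
  define \<alpha> where "\<alpha> = ?f x0"
  have x0V: "x0 \<in> V" and nx0: "norm x0 = 1" using x0 by auto
  have bound: "Re (cinner (H *v y) y) \<le> \<alpha> * (norm y)^2" if y: "y \<in> V" for y
  proof (cases "y = 0")
    case True then show ?thesis by (simp add: matrix_vector_mult_0_right)
  next
    case False
    define r where "r = norm y"
    have r: "r > 0" using False unfolding r_def by simp
    define w where "w = complex_of_real (1 / r) *s y"
    have wS: "w \<in> ?S" unfolding w_def r_def using y scal False by (simp add: norm_scale_vec norm_divide)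
    have yw: "y = complex_of_real r *s w" unfolding w_def using r by (simp add: vec_eq_iff)
    have "cinner (H *v y) y = complex_of_real (r^2) * cinner (H *v w) w"
      unfolding yw mv_scale cinner_scale_left cinner_scale_right by (simp add: power2_eq_square)
    then have "Re (cinner (H *v y) y) = r^2 * ?f w" by simp
    also have "\<dots> \<le> r^2 * \<alpha>" using x0max[OF wS] unfolding \<alpha>_def by (simp add: mult_left_mono)
    finally show ?thesis unfolding r_def by (simp add: mult.commute)
  qed
  define z where "z = complex_of_real \<alpha> *s x0 - H *v x0"
  have minus: "x - y \<in> V" if "x \<in> V" "y \<in> V" for x y
  proof -
    have "x + (-1) *s y \<in> V" using that add scal by blast
    moreover have "x + (-1) *s y = x - y" by (simp add: vec_eq_iff)
    ultimately show ?thesis by simp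
  qed
  have zV: "z \<in> V" unfolding z_def using x0V scal inv minus by blast
  have "z = 0"
  proof (rule ccontr)
    assume z0: "z \<noteq> 0"
    define N where "N = Re (cinner z z)"
    have N: "N > 0" unfolding N_def cinner_self using z0 by simp
    define Q where "Q = \<alpha> * N - Re (cinner (H *v z) z)"
    have herm1: "cinner (H *v z) x0 = cnj (cinner (H *v x0) z)"
      by (metis cinner_adjoint herm cinner_commute)
    have cx: "cinner x0 x0 = 1" unfolding cinner_self nx0 by simp
    have Nz: "N = \<alpha> * Re (cinner x0 z) - Re (cinner (H *v x0) z)"
      unfolding N_def by (simp add: z_def cinner_diff_left cinner_scale_left)
    show False
    proof (rule real_small_contra[OF N])
      fix e :: real assume e: "e > 0"
      define y where "y = x0 - complex_of_real e *s z"
      have yV: "y \<in> V" unfolding y_def using x0V zV scal minus by blast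
      have e1: "cinner (H *v y) y = cinner (H *v x0) x0 - e * cinner (H *v x0) z
              - e * cinner (H *v z) x0 + e^2 * cinner (H *v z) z"
        unfolding y_def mv_diff mv_scale cinner_diff_left cinner_diff_right cinner_scale_left cinner_scale_right
        by (simp add: algebra_simps power2_eq_square)
      have e2: "cinner y y = cinner x0 x0 - e * cinner x0 z - e * cinner z x0 + e^2 * cinner z z"
        unfolding y_def cinner_diff_left cinner_diff_right cinner_scale_left cinner_scale_right
        by (simp add: algebra_simps power2_eq_square)
      have cz: "cinner z x0 = cnj (cinner x0 z)" by (rule cinner_commute)
      have "(norm y)^2 = Re (cinner y y)" by (simp add: cinner_self)
      then have "Re (cinner (H *v y) y) \<le> \<alpha> * Re (cinner y y)" using bound[OF yV] by simp
      then have "\<alpha> * 1 - 2 * e * \<alpha> * Re (cinner x0 z) + \<alpha> * e^2 * N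
          - (\<alpha> - 2 * e * Re (cinner (H *v x0) z) + e^2 * Re (cinner (H *v z) z)) \<ge> 0"
        unfolding e1 e2 herm1 cz cx N_def \<alpha>_def by (simp add: algebra_simps)
      then show "0 \<le> - 2 * e * N + e^2 * Q"
        unfolding Q_def Nz by (simp add: algebra_simps)
    qed
  qed
  then have "H *v x0 = complex_of_real \<alpha> *s x0" unfolding z_def by simp
  moreover have "x0 \<noteq> 0" using nx0 by auto
  ultimately show ?thesis using x0V by blast
qed


lemma finite_chain_max:
  assumes "finite F" "F \<noteq> {}" "\<forall>A\<in>F. \<forall>B\<in>F. A \<subseteq> B \<or> B \<subseteq> A"
  shows "\<exists>M\<in>F. \<forall>A\<in>F. A \<subseteq> M"
  using assms
proof (induction F rule: finite_ne_induct)
  case (singleton x) then show ?case by auto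
next
  case (insert x F)
  then obtain M where M: "M \<in> F" "\<forall>A\<in>F. A \<subseteq> M" by auto
  show ?case
  proof (cases "x \<subseteq> M")
    case True then show ?thesis using M by auto
  next
    case False
    then have "M \<subseteq> x" using insert.prems M by auto
    then show ?thesis using M by auto
  qed
qed

lemma gleason_selection:
  fixes X :: "'a topology" and P :: "('a \<times> 'b::metric_space) set"
  assumes st: "stonean_space X" and K: "compact K"
    and Pc: "closedin (prod_topology X euclidean) P"
    and PK: "P \<subseteq> topspace X \<times> K"
    and Pex: "\<forall>x\<in>topspace X. \<exists>k. (x,k) \<in> P"
  shows "\<exists>g. continuous_map X euclidean g \<and> (\<forall>x\<in>topspace X. (x, g x) \<in> P)"
proof -
  let ?Y = "prod_topology X (euclidean :: 'b topology)"
  have cX: "compact_space X" and hX: "Hausdorff_space X" and ed: "extremally_disconnected X"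
    using st unfolding stonean_space_def by auto
  have cXK: "compactin ?Y (topspace X \<times> K)"
    using cX K by (simp add: compactin_Times compact_space_def compactin_euclidean_iff)
  have cC: "compactin ?Y C" if "closedin ?Y C" "C \<subseteq> P" for C
    using closed_compactin[OF cXK _ that(1)] that(2) PK by auto
  have clfst: "closedin X (fst ` C)" if "closedin ?Y C" "C \<subseteq> P" for C
    by (rule compactin_imp_closedin[OF hX image_compactin[OF cC[OF that] continuous_map_fst]])
  define A where "A = {Q. Q \<subseteq> P \<and> closedin ?Y (P - Q) \<and> fst ` (P - Q) = topspace X}"
  have "\<exists>M\<in>A. \<forall>Z\<in>A. M \<subseteq> Z \<longrightarrow> Z = M"
  proof (rule subset_Zorn')
    fix C assume ch: "subset.chain A C"
    have CA: "C \<subseteq> A" and chn: "\<forall>A\<in>C. \<forall>B\<in>C. A \<subseteq> B \<or> B \<subseteq> A"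
      using ch unfolding subset.chain_def by auto
    have eq: "P - \<Union>C = P \<inter> \<Inter>((\<lambda>Q. P - Q) ` C)" by auto
    have cl: "closedin ?Y (P - \<Union>C)"
    proof (cases "C = {}")
      case True then show ?thesis using Pc by simp
    next
      case False
      then show ?thesis unfolding eq
        using CA unfolding A_def
        by (intro closedin_Int Pc closedin_Inter) auto
    qed
    have "fst ` (P - \<Union>C) = topspace X"
    proof
      show "fst ` (P - \<Union>C) \<subseteq> topspace X" using PK by auto
      show "topspace X \<subseteq> fst ` (P - \<Union>C)"
      proof
        fix x assume x: "x \<in> topspace X"
        have clx: "closedin ?Y ({x} \<times> UNIV)"
          using hX x by (simp add: closedin_prod_Times_iff closedin_Hausdorff_singleton)
        let ?U = "(\<lambda>Q. (P - Q) \<inter> ({x} \<times> UNIV)) ` C"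
        have fip: "\<forall>U. (\<forall>C\<in>U. closedin ?Y C) \<and> (\<forall>F. finite F \<and> F \<subseteq> U \<longrightarrow> P \<inter> \<Inter>F \<noteq> {}) \<longrightarrow> P \<inter> \<Inter>U \<noteq> {}"
          using iffD1[OF compactin_fip cC[OF Pc order_refl]] by (elim conjE) assumption
        have h1: "\<forall>D\<in>?U. closedin ?Y D"
            using CA clx unfolding A_def by auto
        have h2: "\<forall>F. finite F \<and> F \<subseteq> ?U \<longrightarrow> P \<inter> \<Inter> F \<noteq> {}"
          proof (intro allI impI)
            fix F assume F: "finite F \<and> F \<subseteq> ?U"
            then obtain G where G: "G \<subseteq> C" "finite G" "F = (\<lambda>Q. (P - Q) \<inter> ({x} \<times> UNIV)) ` G"
              by (meson finite_subset_image)
            show "P \<inter> \<Inter> F \<noteq> {}"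
            proof (cases "G = {}")
              case True
              obtain k where "(x,k) \<in> P" using Pex x by blast
              then show ?thesis using True G by auto
            next
              case False
              have chG: "\<forall>A\<in>G. \<forall>B\<in>G. A \<subseteq> B \<or> B \<subseteq> A" using G(1) chn by blast
              obtain M where M: "M \<in> G" "\<forall>Q\<in>G. Q \<subseteq> M"
                using finite_chain_max[OF G(2) False chG] by blast
              have "M \<in> A" using M(1) G(1) CA by blast
              then have "fst ` (P - M) = topspace X" unfolding A_def by blast
              then obtain q where q: "q \<in> P - M" "fst q = x" using x by (metis imageE)
              have "q \<in> \<Inter> F"
              proof
                fix D assume "D \<in> F"
                then obtain Q where "Q \<in> G" "D = (P - Q) \<inter> ({x} \<times> UNIV)" using G(3) by blast
                then show "q \<in> D" using M(2) q by (cases q) auto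
              qed
              then show ?thesis using q by blast
            qed
          qed
        have "P \<inter> \<Inter>?U \<noteq> {}" using fip[rule_format, OF conjI[OF h1 h2]] .
        then obtain p where p: "p \<in> P" "p \<in> \<Inter>?U" by blast
        show "x \<in> fst ` (P - \<Union>C)"
        proof (cases "C = {}")
          case True
          obtain k where "(x,k) \<in> P" using Pex x by blast
          then show ?thesis using True by force
        next
          case False
          then obtain Q0 where "Q0 \<in> C" by blast
          then have "p \<in> (P - Q0) \<inter> ({x} \<times> UNIV)" using p(2) by blast
          then have "fst p = x" by auto
          moreover have "p \<notin> \<Union>C" using p(2) by blast
          ultimately show ?thesis using p(1) by blast
        qed
      qed
    qed
    then show "\<Union>C \<in> A" using cl CA unfolding A_def by auto
  qed
  then obtain O0 where O0: "O0 \<in> A" and O0max: "\<forall>Z\<in>A. O0 \<subseteq> Z \<longrightarrow> Z = O0" by blast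
  define C0 where "C0 = P - O0"
  have C0c: "closedin ?Y C0" and C0fst: "fst ` C0 = topspace X" and C0P: "C0 \<subseteq> P"
    using O0 unfolding A_def C0_def by auto
  have C0min: "C' = C0" if "closedin ?Y C'" "C' \<subseteq> C0" "fst ` C' = topspace X" for C'
  proof -
    have "P - C' \<in> A" using that C0P unfolding A_def by (auto simp: Diff_Diff_Int Int_absorb1)
    moreover have "O0 \<subseteq> P - C'" using that O0 unfolding C0_def A_def by auto
    ultimately have "P - C' = O0" using O0max by blast
    then show ?thesis using that C0P unfolding C0_def by auto
  qed
  have uniq: "k1 = k2" if k1: "(x,k1) \<in> C0" and k2: "(x,k2) \<in> C0" for x k1 k2
  proof (rule ccontr)
    assume ne: "k1 \<noteq> k2"
    obtain G1 G2 where G: "open G1" "open G2" "k1 \<in> G1" "k2 \<in> G2" "G1 \<inter> G2 = {}"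
      using separation_t2[THEN iffD1, OF ne] by blast
    define S where "S = (\<lambda>G. topspace X - fst ` (C0 - topspace X \<times> G))"
    have Sopen: "openin X (S G)" if "open G" for G
    proof -
      have "closedin ?Y (C0 - topspace X \<times> G)"
        using that by (intro closedin_diff C0c) (auto simp: openin_prod_Times_iff)
      then have "closedin X (fst ` (C0 - topspace X \<times> G))"
        using clfst C0P by blast
      then show ?thesis unfolding S_def by (auto intro: openin_diff)
    qed
    have Sdisj: "S G1 \<inter> S G2 = {}"
    proof (rule ccontr)
      assume "S G1 \<inter> S G2 \<noteq> {}"
      then obtain y where y: "y \<in> S G1" "y \<in> S G2" by blast
      then have "y \<in> topspace X" unfolding S_def by auto
      then obtain c where c: "c \<in> C0" "fst c = y" using C0fst by force
      have "snd c \<in> G" if "y \<in> S G" for G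
      proof (rule ccontr)
        assume "snd c \<notin> G"
        then have "c \<in> C0 - topspace X \<times> G" using c by auto
        then have "y \<in> fst ` (C0 - topspace X \<times> G)" using c by blast
        then show False using that unfolding S_def by blast
      qed
      then have "snd c \<in> G1" "snd c \<in> G2" using y by auto
      then show False using G by auto
    qed
    have xcl: "x \<in> X closure_of S G" if kG: "(x,k) \<in> C0" "k \<in> G" "open G" for k G
    proof -
      have x: "x \<in> topspace X" using kG C0P PK by auto
      show ?thesis unfolding in_closure_of
      proof (intro conjI x allI impI)
        fix N assume N: "x \<in> N \<and> openin X N"
        show "\<exists>y. y \<in> S G \<and> y \<in> N"
        proof (rule ccontr)
          assume none: "\<not> (\<exists>y. y \<in> S G \<and> y \<in> N)"
          define C' where "C' = C0 - N \<times> G"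
          have "closedin ?Y C'" unfolding C'_def
            using N kG by (intro closedin_diff C0c) (auto simp: openin_prod_Times_iff)
          moreover have "C' \<subseteq> C0" unfolding C'_def by auto
          moreover have "fst ` C' = topspace X"
          proof
            show "fst ` C' \<subseteq> topspace X" using C0fst unfolding C'_def by auto
            show "topspace X \<subseteq> fst ` C'"
            proof
              fix y assume y: "y \<in> topspace X"
              show "y \<in> fst ` C'"
              proof (cases "y \<in> N")
                case False
                obtain c where c: "c \<in> C0" "fst c = y" using C0fst y by force
                then have "c \<in> C'" using False unfolding C'_def by (cases c) auto
                then show ?thesis using c by auto
              next
                case True
                then have "y \<notin> S G" using none by auto
                then have "y \<in> fst ` (C0 - topspace X \<times> G)" using y unfolding S_def by auto
                then obtain c where c: "c \<in> C0 - topspace X \<times> G" "fst c = y" by blast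
                then have c: "c \<in> C0" "snd c \<notin> G" "fst c = y" using C0P PK by (cases c; auto)+
                then have "c \<in> C'" unfolding C'_def by (cases c) auto
                then show ?thesis using c by auto
              qed
            qed
          qed
          ultimately have "C' = C0" using C0min by blast
          moreover have "(x,k) \<notin> C'" using N kG unfolding C'_def by auto
          ultimately show False using kG by auto
        qed
      qed
    qed
    have x1: "x \<in> X closure_of S G1" using xcl[OF k1 G(3) G(1)] .
    have x2: "x \<in> X closure_of S G2" using xcl[OF k2 G(4) G(2)] .
    have "openin X (X closure_of S G1)" using ed Sopen[OF G(1)] unfolding extremally_disconnected_def by blast
    then obtain y where y: "y \<in> S G2" "y \<in> X closure_of S G1"
      using x1 x2[unfolded in_closure_of, THEN conjunct2, rule_format, of "X closure_of S G1"] by blast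
    then obtain z where "z \<in> S G1" "z \<in> S G2"
      using Sopen[OF G(2)] y(2)[unfolded in_closure_of, THEN conjunct2, rule_format, of "S G2"] by blast
    then show False using Sdisj by auto
  qed
  define g where "g = (\<lambda>x. SOME k. (x,k) \<in> C0)"
  have gC0: "(x, g x) \<in> C0" if x: "x \<in> topspace X" for x
  proof -
    obtain c where "c \<in> C0" "fst c = x" using C0fst x by (metis imageE)
    then have "\<exists>k. (x,k) \<in> C0" by (cases c) auto
    then show ?thesis unfolding g_def by (rule someI_ex)
  qed
  have "continuous_map X euclidean g"
    unfolding continuous_map_closedin
  proof (intro conjI allI impI)
    show "g \<in> topspace X \<rightarrow> topspace euclidean" by auto
    fix Z :: "'b set" assume Z: "closedin euclidean Z"
    have eq: "{x \<in> topspace X. g x \<in> Z} = fst ` (C0 \<inter> (topspace X \<times> Z))"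
    proof
      show "{x \<in> topspace X. g x \<in> Z} \<subseteq> fst ` (C0 \<inter> (topspace X \<times> Z))"
      proof
        fix x assume x: "x \<in> {x \<in> topspace X. g x \<in> Z}"
        then have "(x, g x) \<in> C0 \<inter> (topspace X \<times> Z)" using gC0 by auto
        then show "x \<in> fst ` (C0 \<inter> (topspace X \<times> Z))" by (metis fst_conv imageI)
      qed
      show "fst ` (C0 \<inter> (topspace X \<times> Z)) \<subseteq> {x \<in> topspace X. g x \<in> Z}"
      proof
        fix x assume "x \<in> fst ` (C0 \<inter> (topspace X \<times> Z))"
        then obtain k where k: "(x,k) \<in> C0" "x \<in> topspace X" "k \<in> Z" by auto
        then have "g x = k" using uniq gC0 by blast
        then show "x \<in> {x \<in> topspace X. g x \<in> Z}" using k by auto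
      qed
    qed
    have "closedin ?Y (C0 \<inter> (topspace X \<times> Z))"
      using Z C0c by (intro closedin_Int) (auto simp: closedin_prod_Times_iff)
    then show "closedin X {x \<in> topspace X. g x \<in> Z}"
      unfolding eq using clfst C0P by blast
  qed
  then show ?thesis using gC0 C0P by blast
qed


lemma cont_mv: "continuous_on S (\<lambda>y. (H::complex^'n^'m) *v y)"
  unfolding matrix_vector_mult_def by (intro continuous_on_vec_lambda continuous_intros)

lemma cont_cinner_left: "continuous_on S (\<lambda>x::complex^'n. cinner x b)"
  unfolding cinner_def by (intro continuous_intros)

lemma mat_mv: "mat c *v (y::complex^'n) = c *s y"
proof -
  have "(\<Sum>j\<in>UNIV. (if i = j then c else 0) * y $ j) = c * y $ i" for i
    by (simp add: if_distrib[where f="\<lambda>z. z * _"] cong: if_cong)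
  then show ?thesis by (simp add: vec_eq_iff matrix_vector_mult_def mat_def)
qed

lemma cont_scale: "continuous_on S (\<lambda>y::complex^'n. c *s y)"
  using cont_mv[of S "mat c"] by (simp add: mat_mv)

lemma unitary_eig_perp:
  fixes U :: "complex^'n^'n"
  assumes U: "mat_unitary U"
    and eig: "\<And>b. b \<in> B \<Longrightarrow> \<exists>l. U *v b = l *s b"
    and w: "\<forall>b\<in>B. cinner w b = 0" "w \<noteq> 0"
  shows "\<exists>x. x \<noteq> 0 \<and> (\<forall>b\<in>B. cinner x b = 0) \<and> (\<exists>l. U *v x = l *s x)"
proof -
  define V where "V = {x. \<forall>b\<in>B. cinner x b = 0}"
  let ?U' = "mat_adjoint U"
  have clV: "closed V"
  proof -
    have eq: "V = (\<Inter>b\<in>B. {x. cinner x b = 0})" unfolding V_def by auto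
    show ?thesis unfolding eq
      by (intro closed_INT ballI closed_Collect_eq cont_cinner_left continuous_on_const)
  qed
  have addV: "x + y \<in> V" if "x \<in> V" "y \<in> V" for x y
    using that unfolding V_def by (simp add: cinner_add_left)
  have scalV: "c *s x \<in> V" if "x \<in> V" for x c
    using that unfolding V_def by (simp add: cinner_scale_left)
  have diffV: "x - y \<in> V" if "x \<in> V" "y \<in> V" for x y
    using that unfolding V_def by (simp add: cinner_diff_left)
  have UV: "U *v x \<in> V" if x: "x \<in> V" for x
    unfolding V_def mem_Collect_eq
  proof (intro ballI)
    fix b assume b: "b \<in> B"
    obtain l where l: "U *v b = l *s b" using eig[OF b] by blast
    have bb: "b = l *s (?U' *v b)"
      using unitary_left[OF U, of b] unfolding l mv_scale by simp
    have "cinner x (?U' *v b) = 0"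
    proof (cases "l = 0")
      case True
      then have "b = 0" using bb by (simp add: vec_eq_iff)
      then show ?thesis by (simp add: matrix_vector_mult_0_right)
    next
      case False
      have "0 = cinner x b" using x b unfolding V_def by auto
      also have "\<dots> = cnj l * cinner x (?U' *v b)" by (subst bb) (simp add: cinner_scale_right)
      finally show ?thesis using False by simp
    qed
    then show "cinner (U *v x) b = 0" by (simp add: cinner_adjoint)
  qed
  have U'V: "?U' *v x \<in> V" if x: "x \<in> V" for x
    unfolding V_def mem_Collect_eq
  proof (intro ballI)
    fix b assume b: "b \<in> B"
    obtain l where l: "U *v b = l *s b" using eig[OF b] by blast
    have "cinner (?U' *v x) b = cinner x (U *v b)"
      by (metis cinner_adjoint mat_adjoint_adjoint)
    also have "\<dots> = 0" using x b unfolding l V_def by (simp add: cinner_scale_right)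
    finally show "cinner (?U' *v x) b = 0" .
  qed
  define H1 where "H1 = U + ?U'"
  have H1h: "mat_adjoint H1 = H1" unfolding H1_def mat_adjoint_add by (simp add: add.commute)
  have H1v: "H1 *v x = U *v x + ?U' *v x" for x unfolding H1_def mv_add_mat ..
  have wV: "w \<in> V" using w unfolding V_def by auto
  obtain x1 a where x1: "x1 \<in> V" "x1 \<noteq> 0" "H1 *v x1 = complex_of_real a *s x1"
  proof -
    have "\<exists>x\<in>V. x \<noteq> 0 \<and> (\<exists>a::real. H1 *v x = of_real a *s x)"
      by (rule var_eigen[OF H1h clV addV scalV _ wV w(2)]) (auto simp: H1v intro!: addV UV U'V)
    then show ?thesis using that by blast
  qed
  define E where "E = {y \<in> V. H1 *v y = complex_of_real a *s y}"
  define H2 where "H2 = (\<chi> i j. \<i> * (?U' - U) $ i $ j)"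
  have H2v: "H2 *v x = \<i> *s (?U' *v x - U *v x)" for x
    unfolding H2_def mv_diff_mat[symmetric]
    by (simp add: vec_eq_iff matrix_vector_mult_def sum_distrib_left mult.assoc)
  have H2h: "mat_adjoint H2 = H2"
    unfolding H2_def by (simp add: vec_eq_iff) (simp add: algebra_simps)
  have clE: "closed E"
  proof -
    have "E = V \<inter> {y. H1 *v y = complex_of_real a *s y}" unfolding E_def by auto
    moreover have "closed {y. H1 *v y = complex_of_real a *s y}"
      by (intro closed_Collect_eq cont_mv cont_scale)
    ultimately show ?thesis using clV by auto
  qed
  have EV: "E \<subseteq> V" unfolding E_def by auto
  have addE: "y + z \<in> E" if "y \<in> E" "z \<in> E" for y z
    using that addV unfolding E_def by (auto simp: mv_add vec_eq_iff algebra_simps)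
  have scalE: "c *s y \<in> E" if "y \<in> E" for y c
    using that scalV unfolding E_def by (auto simp: mv_scale vec_eq_iff algebra_simps)
  have comm: "H1 *v (H2 *v y) = H2 *v (H1 *v y)" for y
    unfolding H1v H2v mv_add mv_diff mv_scale unitary_left[OF U] unitary_right[OF U]
    by (simp add: vec_eq_iff algebra_simps)
  have H2E: "H2 *v y \<in> E" if y: "y \<in> E" for y
  proof -
    have yV: "y \<in> V" and Hy: "H1 *v y = complex_of_real a *s y" using y unfolding E_def by auto
    have "H2 *v y \<in> V" unfolding H2v using yV by (intro scalV diffV UV U'V)
    moreover have "H1 *v (H2 *v y) = complex_of_real a *s (H2 *v y)"
      unfolding comm Hy mv_scale ..
    ultimately show ?thesis unfolding E_def by auto
  qed
  have x1E: "x1 \<in> E" using x1 unfolding E_def by auto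
  obtain x b where x: "x \<in> E" "x \<noteq> 0" "H2 *v x = complex_of_real b *s x"
  proof -
    have "\<exists>x\<in>E. x \<noteq> 0 \<and> (\<exists>b::real. H2 *v x = of_real b *s x)"
      by (rule var_eigen[OF H2h clE addE scalE H2E x1E x1(2)])
    then show ?thesis using that by blast
  qed
  have e1: "U *v x + ?U' *v x = complex_of_real a *s x" using x(1) H1v unfolding E_def by auto
  have e2: "\<i> *s (?U' *v x - U *v x) = complex_of_real b *s x" using x(3) H2v by simp
  have "U *v x = ((complex_of_real a + \<i> * complex_of_real b) / 2) *s x"
  proof (subst vec_eq_iff, intro allI)
    fix i
    let ?p = "(U *v x) $ i" and ?q = "(?U' *v x) $ i" and ?t = "x $ i"
    have f1: "?p + ?q = complex_of_real a * ?t" using arg_cong[OF e1, of "\<lambda>v. v $ i"] by simp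
    have f2: "\<i> * (?q - ?p) = complex_of_real b * ?t" using arg_cong[OF e2, of "\<lambda>v. v $ i"] by (simp add: right_diff_distrib)
    have f3: "?q - ?p = - \<i> * (complex_of_real b * ?t)"
    proof -
      have "- \<i> * (\<i> * (?q - ?p)) = ?q - ?p" by (simp add: algebra_simps)
      then show ?thesis using f2 by simp
    qed
    have "2 * ?p = (?p + ?q) - (?q - ?p)" by simp
    also have "\<dots> = (complex_of_real a + \<i> * complex_of_real b) * ?t"
      unfolding f1 f3 by (simp add: algebra_simps)
    finally show "(U *v x) $ i = (((complex_of_real a + \<i> * complex_of_real b) / 2) *s x) $ i"
      by (simp add: mult.commute)
  qed
  moreover have "\<forall>b\<in>B. cinner x b = 0" using x(1) EV unfolding V_def by auto
  ultimately show ?thesis using x(2) by blast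
qed


definition sg :: "nat \<Rightarrow> nat \<Rightarrow> nat" where
  "sg N k = (if even k then (if k + 1 < N then k + 1 else k) else k - 1)"
definition tg :: "nat \<Rightarrow> nat \<Rightarrow> nat" where
  "tg N k = (if odd k then (if k + 1 < N then k + 1 else k) else (if k = 0 then 0 else k - 1))"

lemma sg_lt: "k < N \<Longrightarrow> sg N k < N" unfolding sg_def by auto
lemma tg_lt: "k < N \<Longrightarrow> tg N k < N" unfolding tg_def by auto
lemma sg_inv: "k < N \<Longrightarrow> sg N (sg N k) = k"
  unfolding sg_def by (auto elim: oddE)
lemma tg_inv: "k < N \<Longrightarrow> tg N (tg N k) = k"
  unfolding tg_def by (auto elim: oddE)

lemma unit_prod:
  assumes "\<And>j. j \<in> A \<Longrightarrow> (dd j :: complex) * cnj (dd j) = 1"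
  shows "prod dd A * cnj (prod dd A) = 1"
  using assms
proof (induction A rule: infinite_finite_induct)
  case (insert x F)
  then show ?case by (simp add: algebra_simps)
qed auto

lemma nat_factor:
  fixes dd :: "nat \<Rightarrow> complex" and s :: complex
  assumes N: "N \<ge> 1" and k: "k < N"
    and u: "\<And>j. j < N \<Longrightarrow> dd j * cnj (dd j) = 1"
    and s: "(\<Prod>j<N. dd j) = s"
  defines "p \<equiv> (\<lambda>k. \<Prod>j<Suc k. dd j)"
  defines "E \<equiv> (\<lambda>k. if even k then p k else 1)"
  defines "E' \<equiv> (\<lambda>k. if odd k then p k else 1)"
  defines "s1 \<equiv> (\<lambda>k. if even k \<and> k = N - 1 then s else 1)"
  defines "s2 \<equiv> (\<lambda>k. if odd k \<and> k = N - 1 then s else 1)"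
  shows "(E k * cnj (E (sg N k)) * s1 (sg N k)) * (E' k * cnj (E' (tg N k)) * s2 (tg N k)) = dd k"
proof -
  have pu: "p m * cnj (p m) = 1" if "m < N" for m
    unfolding p_def by (rule unit_prod) (use u that in auto)
  have pN: "p (N - 1) = s" unfolding p_def using N s by simp
  have pS: "p (Suc m) = p m * dd (Suc m)" for m unfolding p_def by simp
  have p0: "p 0 = dd 0" unfolding p_def by simp
  have step: "cnj (p (m - 1)) * p m = dd m" if m1: "m \<ge> 1" and mN: "m < N" for m
  proof -
    obtain m' where m': "m = Suc m'" using m1 by (cases m) auto
    have "cnj (p m') * p (Suc m') = (p m' * cnj (p m')) * dd (Suc m')" unfolding pS by (simp add: mult_ac)
    also have "\<dots> = dd (Suc m')" using pu[of m'] mN m' by simp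
    finally show ?thesis using m' by simp
  qed
  show ?thesis
  proof (cases "even k")
    case True
    have D1: "E k * cnj (E (sg N k)) * s1 (sg N k) = p k"
    proof (cases "k + 1 < N")
      case True
      then show ?thesis using \<open>even k\<close> unfolding E_def s1_def sg_def by auto
    next
      case False
      then have kN: "k = N - 1" using k by auto
      then have "E k * cnj (E (sg N k)) * s1 (sg N k) = p k * cnj (p k) * s"
        using \<open>even k\<close> N unfolding E_def s1_def sg_def by auto
      also have "\<dots> = s" using pu[OF k] by simp
      finally show ?thesis using pN kN by simp
    qed
    show ?thesis
    proof (cases "k = 0")
      case True
      then have "E' k * cnj (E' (tg N k)) * s2 (tg N k) = 1"
        unfolding E'_def s2_def tg_def by auto
      then show ?thesis using D1 True p0 by simp
    next
      case False
      then have "E' k * cnj (E' (tg N k)) * s2 (tg N k) = cnj (p (k - 1))"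
        using \<open>even k\<close> k unfolding E'_def s2_def tg_def by (auto elim: evenE)
      then show ?thesis using D1 step[of k] False k by (simp add: mult.commute)
    qed
  next
    case False
    then have k1: "k \<ge> 1" by (cases k) auto
    have D1: "E k * cnj (E (sg N k)) * s1 (sg N k) = cnj (p (k - 1))"
      using False k unfolding E_def s1_def sg_def by (auto elim: oddE)
    have D2: "E' k * cnj (E' (tg N k)) * s2 (tg N k) = p k"
    proof (cases "k + 1 < N")
      case True
      then show ?thesis using False unfolding E'_def s2_def tg_def by auto
    next
      case F2: False
      then have kN: "k = N - 1" using k by auto
      then have "E' k * cnj (E' (tg N k)) * s2 (tg N k) = p k * cnj (p k) * s"
        using False N unfolding E'_def s2_def tg_def by auto
      also have "\<dots> = s" using pu[OF k] by simp
      finally show ?thesis using pN kN by simp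
    qed
    show ?thesis unfolding D1 D2 using step[OF k1 k] .
  qed
qed


lemma exists_perp:
  fixes B :: "(complex^'n) set"
  assumes finB: "finite B" and cB: "card B < CARD('n)"
  shows "\<exists>w. w \<noteq> 0 \<and> (\<forall>b\<in>B. cinner w b = 0)"
proof -
  obtain h :: "complex^'n \<Rightarrow> 'n" where h: "inj_on h B"
    using card_le_inj[OF finB finite_class.finite_UNIV[where 'a='n]] cB by auto
  define L where "L = (\<lambda>x::complex^'n. \<chi> j. \<Sum>b\<in>B. if h b = j then cinner x b else 0)"
  have Lnth: "L x $ j = (\<Sum>b\<in>B. if h b = j then cinner x b else 0)" for x j
    unfolding L_def by simp
  have lin: "Vector_Spaces.linear (*s) (*s) L"
    unfolding Vector_Spaces.linear_iff
  proof (intro conjI vec.vector_space_axioms allI)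
    show "L (x + y) = L x + L y" for x y
      by (simp add: vec_eq_iff Lnth cinner_add_left sum.distrib[symmetric] if_distrib cong: if_cong)
    show "L (c *s x) = c *s L x" for c x
      by (simp add: vec_eq_iff Lnth cinner_scale_left sum_distrib_left if_distrib cong: if_cong)
  qed
  have "card (h ` B) < CARD('n)" using card_image[OF h] cB by simp
  then have "h ` B \<noteq> UNIV" by auto
  then obtain j0 where j0: "j0 \<notin> h ` B" by blast
  have "\<not> surj L"
  proof
    assume "surj L"
    then obtain x where "L x = axis j0 1" by (metis surjD)
    then have "L x $ j0 = 1" by (simp add: axis_def)
    moreover have "L x $ j0 = 0" unfolding Lnth by (rule sum.neutral) (use j0 in auto)
    ultimately show False by simp
  qed
  then have "\<not> inj L" using vec.linear_injective_imp_surjective[OF lin] by blast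
  then obtain x y where xy: "x \<noteq> y" "L x = L y" unfolding inj_def by blast
  define w where "w = x - y"
  have w0: "w \<noteq> 0" using xy unfolding w_def by simp
  have Ldiff: "L (x - y) = L x - L y"
  proof -
    have "(\<Sum>b\<in>B. if h b = j then cinner (x - y) b else 0) =
          (\<Sum>b\<in>B. if h b = j then cinner x b else 0) - (\<Sum>b\<in>B. if h b = j then cinner y b else 0)" for j
      unfolding sum_subtractf[symmetric] by (rule sum.cong) (auto simp: cinner_diff_left)
    then show ?thesis by (simp add: vec_eq_iff Lnth)
  qed
  have Lw: "L w = 0"
    using xy(2) unfolding w_def Ldiff by simp
  have "cinner w b = 0" if b: "b \<in> B" for b
  proof -
    have "L w $ h b = (\<Sum>b'\<in>B. if b' = b then cinner w b' else 0)"
      unfolding Lnth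
      by (rule sum.cong) (use h b in \<open>auto simp: inj_on_def\<close>)
    also have "\<dots> = cinner w b" using b finB by simp
    finally show ?thesis using Lw by simp
  qed
  then show ?thesis using w0 by blast
qed

definition orthonormal :: "(complex^'n) set \<Rightarrow> bool" where
  "orthonormal B \<longleftrightarrow> (\<forall>b\<in>B. \<forall>c\<in>B. cinner b c = (if b = c then 1 else 0))"

lemma onb_exists:
  fixes U :: "complex^'n^'n"
  assumes U: "mat_unitary U"
  shows "k \<le> CARD('n) \<Longrightarrow> \<exists>B. finite B \<and> card B = k \<and> orthonormal B \<and> (\<forall>b\<in>B. \<exists>l. U *v b = l *s b)"
proof (induction k)
  case 0
  show ?case by (rule exI[of _ "{}"]) (simp add: orthonormal_def)
next
  case (Suc k)
  then obtain B where B: "finite B" "card B = k" "orthonormal B" "\<forall>b\<in>B. \<exists>l. U *v b = l *s b"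
    by auto
  obtain w where w: "w \<noteq> 0" "\<forall>b\<in>B. cinner w b = 0"
    using exists_perp[OF B(1)] B(2) Suc.prems by auto
  obtain x l where x: "x \<noteq> 0" "\<forall>b\<in>B. cinner x b = 0" "U *v x = l *s x"
    using unitary_eig_perp[OF U _ w(2,1)] B(4) by blast
  define c where "c = complex_of_real (1 / norm x)"
  define u where "u = c *s x"
  have "cinner u u = c * (cnj c * cinner x x)"
    unfolding u_def cinner_scale_left cinner_scale_right by (simp add: mult_ac)
  also have "\<dots> = 1" unfolding cinner_self c_def using x(1)
    by (simp add: power2_eq_square)
  finally have uu: "cinner u u = 1" .
  have ub: "cinner u b = 0" if "b \<in> B" for b
    unfolding u_def cinner_scale_left using x(2) that by simp
  have uB: "u \<notin> B" using ub uu by force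
  have ueig: "U *v u = l *s u" unfolding u_def mv_scale x(3) by (simp add: vec_eq_iff mult_ac)
  show ?case
  proof (intro exI[of _ "insert u B"] conjI)
    show "finite (insert u B)" using B(1) by simp
    show "card (insert u B) = Suc k" using B(1,2) uB by simp
    show "\<forall>b\<in>insert u B. \<exists>l. U *v b = l *s b" using B(4) ueig by auto
    show "orthonormal (insert u B)"
      unfolding orthonormal_def
    proof (intro ballI)
      fix b1 b2 assume b1: "b1 \<in> insert u B" and b2: "b2 \<in> insert u B"
      show "cinner b1 b2 = (if b1 = b2 then 1 else 0)"
      proof (cases "b1 = u")
        case True
        then show ?thesis using b2 uu ub uB by auto
      next
        case False
        then have b1B: "b1 \<in> B" using b1 by auto
        show ?thesis
        proof (cases "b2 = u")
          case True
          then show ?thesis using b1B ub uB cinner_commute[of b1 u] by auto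
        next
          case False
          then show ?thesis using b1B b2 B(3) unfolding orthonormal_def by auto
        qed
      qed
    qed
  qed
qed

definition diagm :: "('n \<Rightarrow> complex) \<Rightarrow> complex^'n^'n" where
  "diagm d = (\<chi> i j. if i = j then d i else 0)"

lemma unitary_diag:
  fixes U :: "complex^'n^'n"
  assumes U: "mat_unitary U"
  shows "\<exists>W d. mat_unitary W \<and> U = W ** diagm d ** mat_adjoint W"
proof -
  obtain B where B: "finite B" "card B = CARD('n)" "orthonormal B" "\<forall>b\<in>B. \<exists>l. U *v b = l *s b"
    using onb_exists[OF U order_refl] by blast
  obtain g where g: "bij_betw g (UNIV::'n set) B"
    using finite_same_card_bij[OF finite_class.finite_UNIV B(1)] B(2) by auto
  have gB: "g j \<in> B" for j using g by (auto simp: bij_betw_def)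
  have ginj: "g j = g k \<longleftrightarrow> j = k" for j k using g by (auto simp: bij_betw_def inj_on_def)
  define W where "W = (\<chi> i j. g j $ i)"
  define d where "d = (\<lambda>j. SOME l. U *v g j = l *s g j)"
  have dj: "U *v g j = d j *s g j" for j
    unfolding d_def using B(4) gB by (metis (mono_tags, lifting) someI_ex)
  have WW: "mat_adjoint W ** W = mat 1"
  proof -
    have "(mat_adjoint W ** W) $ j $ k = cinner (g k) (g j)" for j k
      unfolding W_def cinner_def matrix_matrix_mult_def by (simp add: mult.commute)
    also have "cinner (g k) (g j) = (if j = k then 1 else 0)" for j k
      using B(3) gB ginj unfolding orthonormal_def by auto
    finally show ?thesis by (simp add: vec_eq_iff mat_def)
  qed
  then have WW': "W ** mat_adjoint W = mat 1" using matrix_left_right_inverse by blast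
  have Wu: "mat_unitary W" unfolding mat_unitary_def using WW WW' by simp
  have UW: "U ** W = W ** diagm d"
  proof -
    have "(U ** W) $ i $ j = (U *v g j) $ i" for i j
      unfolding W_def matrix_matrix_mult_def matrix_vector_mult_def by simp
    moreover have "(W ** diagm d) $ i $ j = (d j *s g j) $ i" for i j
    proof -
      have "(W ** diagm d) $ i $ j = (\<Sum>k\<in>UNIV. W $ i $ k * (if k = j then d k else 0))"
        unfolding matrix_matrix_mult_def diagm_def by simp
      also have "\<dots> = (\<Sum>k\<in>UNIV. (if k = j then W $ i $ k * d j else 0))"
        by (rule sum.cong) auto
      also have "\<dots> = W $ i $ j * d j" by simp
      finally show ?thesis unfolding W_def by (simp add: mult.commute)
    qed
    ultimately show ?thesis using dj by (simp add: vec_eq_iff)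
  qed
  have "U = U ** (W ** mat_adjoint W)" using WW' by simp
  also have "\<dots> = W ** diagm d ** mat_adjoint W" by (simp add: matrix_mul_assoc UW)
  finally show ?thesis using Wu by blast
qed


lemma det_adjoint: "det (mat_adjoint A) = cnj (det (A::complex^'n^'n))"
proof -
  have "mat_adjoint A = transpose (\<chi> i j. cnj (A $ i $ j))"
    by (simp add: vec_eq_iff transpose_def)
  then have "det (mat_adjoint A) = det (\<chi> i j. cnj (A $ i $ j))" by (simp add: det_transpose)
  also have "\<dots> = cnj (det A)"
    unfolding det_def by (simp add: cnj_sum cnj_prod)
  finally show ?thesis .
qed

definition pm :: "('n \<Rightarrow> 'n) \<Rightarrow> ('n \<Rightarrow> complex) \<Rightarrow> complex^'n^'n" where
  "pm p c = (\<chi> i j. if j = p i then c i else 0)"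

lemma pm_adjoint:
  assumes inv: "\<And>i. p (p i) = i" and c: "\<And>i. c (p i) = cnj (c i)"
  shows "mat_adjoint (pm p c) = pm p c"
proof -
  have "cnj (if i = p j then c j else 0) = (if j = p i then c i else 0)" for i j
    by (metis c complex_cnj_cnj complex_cnj_zero inv)
  then show ?thesis unfolding pm_def by (simp add: vec_eq_iff)
qed

lemma pm_mult:
  assumes inv: "\<And>i. p (p i) = i"
  shows "pm p a ** pm p b = diagm (\<lambda>i. a i * b (p i))"
proof -
  have "(\<Sum>k\<in>UNIV. (if k = p i then a i else 0) * (if j = p k then b k else 0))
      = (if i = j then a i * b (p i) else 0)" for i j
  proof -
    have "(\<Sum>k\<in>UNIV. (if k = p i then a i else 0) * (if j = p k then b k else 0))
        = (\<Sum>k\<in>UNIV. if k = p i then a i * (if j = p k then b k else 0) else 0)"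
      by (rule sum.cong) auto
    also have "\<dots> = a i * (if j = p (p i) then b (p i) else 0)" by (subst sum.delta) auto
    also have "\<dots> = (if i = j then a i * b (p i) else 0)" using inv by auto
    finally show ?thesis .
  qed
  then show ?thesis unfolding pm_def diagm_def matrix_matrix_mult_def by (simp add: vec_eq_iff)
qed

lemma pm_sym:
  assumes inv: "\<And>i. p (p i) = i" and c: "\<And>i. c (p i) = cnj (c i)"
    and u: "\<And>i. c i * cnj (c i) = 1"
  shows "mat_symmetry (pm p c)"
proof -
  have adj: "mat_adjoint (pm p c) = pm p c" using pm_adjoint inv c by blast
  have "pm p c ** pm p c = diagm (\<lambda>i. c i * c (p i))" by (rule pm_mult[OF inv])
  also have "\<dots> = mat 1" using u c by (simp add: diagm_def mat_def vec_eq_iff)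
  finally show ?thesis unfolding mat_symmetry_def mat_unitary_def adj by simp
qed

lemma diagm_mult: "diagm a ** diagm b = diagm (\<lambda>i. a i * b i)" for a b :: "'n::finite \<Rightarrow> complex"
proof -
  have "(\<Sum>k\<in>UNIV. (if i = k then a i else 0) * (if k = j then b k else 0))
      = (if i = j then a i * b i else 0)" for i j :: 'n
  proof -
    have "(\<Sum>k\<in>UNIV. (if i = k then a i else 0) * (if k = j then b k else 0))
        = (\<Sum>k\<in>UNIV. if k = i then a i * (if k = j then b k else 0) else 0)"
      by (rule sum.cong) auto
    also have "\<dots> = (if i = j then a i * b i else 0)" by simp
    finally show ?thesis .
  qed
  then show ?thesis unfolding diagm_def matrix_matrix_mult_def by (simp add: vec_eq_iff)
qed

lemma diagm_adjoint: "mat_adjoint (diagm d) = diagm (\<lambda>i. cnj (d i))"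
  unfolding diagm_def by (simp add: vec_eq_iff)

lemma sym_conj:
  assumes W: "mat_unitary W" and R: "mat_symmetry R"
  shows "mat_symmetry (W ** R ** mat_adjoint W)"
proof -
  have "mat_adjoint (W ** R ** mat_adjoint W) = W ** R ** mat_adjoint W"
    using R unfolding mat_symmetry_def by (simp add: mat_adjoint_mult matrix_mul_assoc)
  moreover have "mat_unitary (W ** R ** mat_adjoint W)"
    using W R unfolding mat_symmetry_def by (blast intro: unitary_mult unitary_adjoint)
  ultimately show ?thesis unfolding mat_symmetry_def by simp
qed

lemma cancel_mid:
  assumes "mat_adjoint W ** W = mat 1"
  shows "X ** mat_adjoint W ** (W ** Y) = X ** (Y::complex^'n^'n)"
proof -
  have "X ** mat_adjoint W ** (W ** Y) = X ** ((mat_adjoint W ** W) ** Y)"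
    by (simp add: matrix_mul_assoc)
  then show ?thesis using assms by simp
qed


lemma s1_sg:
  assumes "k < N" 
  shows "(if even (sg N k) \<and> sg N k = N - 1 then s else 1) = (if even k \<and> k = N - 1 then s else (1::complex))"
  using assms unfolding sg_def by (auto elim: oddE)

lemma s2_tg:
  assumes "k < N" 
  shows "(if odd (tg N k) \<and> tg N k = N - 1 then s else 1) = (if odd k \<and> k = N - 1 then s else (1::complex))"
  using assms unfolding tg_def by (auto elim: oddE)

lemma pointwise_factor:
  fixes U :: "complex^'n^'n"
  assumes U: "mat_unitary U" and sr: "cnj (det U) = det U" and su: "det U * cnj (det U) = 1"
  shows "\<exists>R1 R2 R3 R4. mat_symmetry R1 \<and> mat_symmetry R2 \<and> mat_symmetry R3 \<and> mat_symmetry R4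
           \<and> U = R1 ** R2 ** R3 ** R4"
proof -
  obtain W d where W: "mat_unitary W" and Ud: "U = W ** diagm d ** mat_adjoint W"
    using unitary_diag[OF U] by blast
  have WtW: "mat_adjoint W ** W = mat 1" and WWt: "W ** mat_adjoint W = mat 1"
    using W unfolding mat_unitary_def by auto
  have Dd: "diagm d = mat_adjoint W ** U ** W"
  proof -
    have "mat_adjoint W ** U ** W = (mat_adjoint W ** W) ** diagm d ** (mat_adjoint W ** W)"
      unfolding Ud by (simp add: matrix_mul_assoc)
    then show ?thesis using WtW by simp
  qed
  have Du: "mat_unitary (diagm d)" unfolding Dd
    by (intro unitary_mult unitary_adjoint W U)
  have du: "d i * cnj (d i) = 1" for i
  proof -
    have "diagm d ** mat_adjoint (diagm d) = mat 1" using Du unfolding mat_unitary_def by simp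
    then have "(diagm d ** mat_adjoint (diagm d)) $ i $ i = 1" by (simp add: mat_def)
    then show ?thesis unfolding diagm_adjoint diagm_mult by (simp add: diagm_def)
  qed
  define s where "s = det U"
  have detW: "det W * cnj (det W) = 1"
    using arg_cong[OF WWt, of det] by (simp add: det_mul det_adjoint det_I)
  have sprod: "s = (\<Prod>i\<in>UNIV. d i)"
  proof -
    have "s = det W * det (diagm d) * cnj (det W)" unfolding s_def Ud by (simp add: det_mul det_adjoint)
    also have "det (diagm d) = (\<Prod>i\<in>UNIV. d i)" by (subst det_diagonal) (auto simp: diagm_def)
    finally show ?thesis using detW by (simp add: mult_ac)
  qed
  define N where "N = CARD('n)"
  have N1: "N \<ge> 1" unfolding N_def by (simp add: Suc_leI)
  obtain f where f: "bij_betw f (UNIV::'n set) {..<N}"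
    using finite_same_card_bij[OF finite_class.finite_UNIV, of "{..<N}"] unfolding N_def by auto
  define g where "g = inv_into UNIV f"
  have fN: "f i < N" for i using f by (auto simp: bij_betw_def)
  have gf: "g (f i) = i" for i unfolding g_def using f by (simp add: bij_betw_def inv_into_f_f)
  have fg: "k < N \<Longrightarrow> f (g k) = k" for k unfolding g_def using f by (simp add: bij_betw_def f_inv_into_f)
  define dd where "dd = (\<lambda>k. d (g k))"
  have ddu: "dd j * cnj (dd j) = 1" for j unfolding dd_def by (rule du)
  have ddprod: "(\<Prod>j<N. dd j) = s"
  proof -
    have "(\<Prod>j<N. dd j) = (\<Prod>i\<in>UNIV. dd (f i))"
      using prod.reindex_bij_betw[OF f, of dd] by simp
    also have "\<dots> = s" unfolding dd_def gf sprod ..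
    finally show ?thesis .
  qed
  define p where "p = (\<lambda>k. \<Prod>j<Suc k. dd j)"
  define E where "E = (\<lambda>k. if even k then p k else 1)"
  define E' where "E' = (\<lambda>k. if odd k then p k else 1)"
  define s1 where "s1 = (\<lambda>k. if even k \<and> k = N - 1 then s else 1)"
  define s2 where "s2 = (\<lambda>k. if odd k \<and> k = N - 1 then s else 1)"
  have key: "(E k * cnj (E (sg N k)) * s1 (sg N k)) * (E' k * cnj (E' (tg N k)) * s2 (tg N k)) = dd k"
    if "k < N" for k
    using nat_factor[OF N1 that ddu ddprod] unfolding p_def E_def E'_def s1_def s2_def by blast
  have pu: "p k * cnj (p k) = 1" for k unfolding p_def by (rule unit_prod) (use ddu in auto)
  have Eu: "E k * cnj (E k) = 1" "E' k * cnj (E' k) = 1" for k unfolding E_def E'_def using pu by auto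
  have sreal: "cnj s = s" and sunit: "s * cnj s = 1" using sr su unfolding s_def by auto
  have s1u: "s1 k * cnj (s1 k) = 1" "cnj (s1 k) = s1 k" for k unfolding s1_def using sreal sunit by auto
  have s2u: "s2 k * cnj (s2 k) = 1" "cnj (s2 k) = s2 k" for k unfolding s2_def using sreal sunit by auto
  define \<sigma> where "\<sigma> = (\<lambda>i. g (sg N (f i)))"
  define \<tau> where "\<tau> = (\<lambda>i. g (tg N (f i)))"
  have f\<sigma>: "f (\<sigma> i) = sg N (f i)" for i unfolding \<sigma>_def using fg sg_lt fN by blast
  have f\<tau>: "f (\<tau> i) = tg N (f i)" for i unfolding \<tau>_def using fg tg_lt fN by blast
  have \<sigma>\<sigma>: "\<sigma> (\<sigma> i) = i" for i unfolding \<sigma>_def using fg sg_lt fN sg_inv gf by metis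
  have \<tau>\<tau>: "\<tau> (\<tau> i) = i" for i unfolding \<tau>_def using fg tg_lt fN tg_inv gf by metis
  define a1 where "a1 = (\<lambda>i. E (f i) * cnj (E (f (\<sigma> i))))"
  define c2 where "c2 = (\<lambda>i. s1 (f i))"
  define a3 where "a3 = (\<lambda>i. E' (f i) * cnj (E' (f (\<tau> i))))"
  define c4 where "c4 = (\<lambda>i. s2 (f i))"
  define R1 where "R1 = pm \<sigma> a1"
  define R2 where "R2 = pm \<sigma> c2"
  define R3 where "R3 = pm \<tau> a3"
  define R4 where "R4 = pm \<tau> c4"
  have sym1: "mat_symmetry R1" unfolding R1_def
  proof (rule pm_sym[OF \<sigma>\<sigma>])
    show "a1 (\<sigma> i) = cnj (a1 i)" for i unfolding a1_def \<sigma>\<sigma> by (simp add: mult.commute)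
    show "a1 i * cnj (a1 i) = 1" for i unfolding a1_def
      using Eu(1)[of "f i"] Eu(1)[of "f (\<sigma> i)"] by (simp add: algebra_simps)
  qed
  have c2\<sigma>: "c2 (\<sigma> i) = c2 i" for i unfolding c2_def f\<sigma> s1_def using s1_sg[OF fN] by blast
  have sym2: "mat_symmetry R2" unfolding R2_def
  proof (rule pm_sym[OF \<sigma>\<sigma>])
    show "c2 (\<sigma> i) = cnj (c2 i)" for i using c2\<sigma>[of i] s1u(2)[of "f i"] by (simp add: c2_def)
    show "c2 i * cnj (c2 i) = 1" for i unfolding c2_def using s1u by simp
  qed
  have sym3: "mat_symmetry R3" unfolding R3_def
  proof (rule pm_sym[OF \<tau>\<tau>])
    show "a3 (\<tau> i) = cnj (a3 i)" for i unfolding a3_def \<tau>\<tau> by (simp add: mult.commute)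
    show "a3 i * cnj (a3 i) = 1" for i unfolding a3_def
      using Eu(2)[of "f i"] Eu(2)[of "f (\<tau> i)"] by (simp add: algebra_simps)
  qed
  have c4\<tau>: "c4 (\<tau> i) = c4 i" for i unfolding c4_def f\<tau> s2_def using s2_tg[OF fN] by blast
  have sym4: "mat_symmetry R4" unfolding R4_def
  proof (rule pm_sym[OF \<tau>\<tau>])
    show "c4 (\<tau> i) = cnj (c4 i)" for i using c4\<tau>[of i] s2u(2)[of "f i"] by (simp add: c4_def)
    show "c4 i * cnj (c4 i) = 1" for i unfolding c4_def using s2u by simp
  qed
  have prod: "R1 ** R2 ** (R3 ** R4) = diagm d"
  proof -
    have "R1 ** R2 ** (R3 ** R4) = diagm (\<lambda>i. a1 i * c2 (\<sigma> i)) ** diagm (\<lambda>i. a3 i * c4 (\<tau> i))"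
      unfolding R1_def R2_def R3_def R4_def pm_mult[OF \<sigma>\<sigma>] pm_mult[OF \<tau>\<tau>] ..
    also have "\<dots> = diagm (\<lambda>i. (a1 i * c2 (\<sigma> i)) * (a3 i * c4 (\<tau> i)))" by (rule diagm_mult)
    also have "(\<lambda>i. (a1 i * c2 (\<sigma> i)) * (a3 i * c4 (\<tau> i))) = d"
    proof
      fix i
      have "(a1 i * c2 (\<sigma> i)) * (a3 i * c4 (\<tau> i)) = dd (f i)"
        unfolding a1_def c2_def a3_def c4_def f\<sigma> f\<tau> using key[OF fN] .
      then show "(a1 i * c2 (\<sigma> i)) * (a3 i * c4 (\<tau> i)) = d i" unfolding dd_def gf .
    qed
    finally show ?thesis .
  qed
  define S where "S = (\<lambda>R. W ** R ** mat_adjoint W)"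
  have Ssym: "mat_symmetry R \<Longrightarrow> mat_symmetry (S R)" for R unfolding S_def by (rule sym_conj[OF W])
  have Smul: "S A ** S B = S (A ** B)" for A B
    unfolding S_def using cancel_mid[OF WtW, of "W ** A" "B ** mat_adjoint W"] by (simp add: matrix_mul_assoc)
  have "U = S (R1 ** R2 ** (R3 ** R4))" unfolding prod S_def Ud ..
  also have "\<dots> = S R1 ** S R2 ** S R3 ** S R4" by (simp add: Smul matrix_mul_assoc)
  finally show ?thesis using Ssym sym1 sym2 sym3 sym4 by blast
qed


lemma cont_mmult: "continuous_on S f \<Longrightarrow> continuous_on S g \<Longrightarrow>
  continuous_on S (\<lambda>x. (f x :: complex^'n^'n) ** g x)"
  unfolding matrix_matrix_mult_def by (intro continuous_on_vec_lambda continuous_intros)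

lemma cont_adj: "continuous_on S (mat_adjoint :: complex^'n^'n \<Rightarrow> _)"
  unfolding mat_adjoint_def by (intro continuous_on_vec_lambda continuous_intros)

lemma norm_vec_sq2: "(norm (x::'a::real_normed_vector^'n))^2 = (\<Sum>i\<in>UNIV. (norm (x$i))^2)"
  unfolding norm_vec_def L2_set_def by (simp add: sum_nonneg)

lemma unitary_norm: "mat_unitary (R::complex^'n^'n) \<Longrightarrow> norm R = sqrt (real CARD('n))"
proof -
  assume R: "mat_unitary R"
  have "(norm (R $ i))^2 = 1" for i
  proof -
    have "(R ** mat_adjoint R) $ i $ i = 1" using R unfolding mat_unitary_def by (simp add: mat_def)
    then have "(\<Sum>j\<in>UNIV. R $ i $ j * cnj (R $ i $ j)) = 1"
      by (simp add: matrix_matrix_mult_def)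
    then have "(\<Sum>j\<in>UNIV. complex_of_real ((cmod (R $ i $ j))^2)) = 1"
      by (simp only: complex_norm_square)
    then have "complex_of_real (\<Sum>j\<in>UNIV. (cmod (R $ i $ j))^2) = 1" by (simp only: of_real_sum)
    then show ?thesis unfolding norm_vec_sq by (simp only: of_real_eq_1_iff)
  qed
  then have "(norm R)^2 = real CARD('n)" unfolding norm_vec_sq2 by simp
  then show ?thesis by (metis norm_ge_zero real_sqrt_unique)
qed

lemma compact_sym: "compact {R::complex^'n^'n. mat_symmetry R}"
unfolding compact_eq_bounded_closed proof (rule conjI)
  show "bounded {R::complex^'n^'n. mat_symmetry R}"
    unfolding bounded_iff by (rule exI[of _ "sqrt (real CARD('n))"]) (auto simp: mat_symmetry_def unitary_norm)
  have eq: "{R::complex^'n^'n. mat_symmetry R} =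
      {R. mat_adjoint R = R} \<inter> {R. R ** mat_adjoint R = mat 1} \<inter> {R. mat_adjoint R ** R = mat 1}"
    unfolding mat_symmetry_def mat_unitary_def by auto
  have c1: "closed {R::complex^'n^'n. mat_adjoint R = R}"
    by (rule closed_Collect_eq[OF cont_adj continuous_on_id])
  have c2: "closed {R::complex^'n^'n. R ** mat_adjoint R = mat 1}"
    by (rule closed_Collect_eq[OF cont_mmult[OF continuous_on_id cont_adj] continuous_on_const])
  have c3: "closed {R::complex^'n^'n. mat_adjoint R ** R = mat 1}"
    by (rule closed_Collect_eq[OF cont_mmult[OF cont_adj continuous_on_id] continuous_on_const])
  show "closed {R::complex^'n^'n. mat_symmetry R}" unfolding eq
    using c1 c2 c3 by (intro closed_Int)
qed

lemma det_sym: "mat_symmetry R \<Longrightarrow> cnj (det R) = det R \<and> det R * cnj (det R) = 1"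
proof -
  assume R: "mat_symmetry R"
  then have a: "mat_adjoint R = R" and u: "R ** mat_adjoint R = mat 1"
    unfolding mat_symmetry_def mat_unitary_def by auto
  have "cnj (det R) = det R" using det_adjoint[of R] a by simp
  moreover have "det R * cnj (det R) = 1" using arg_cong[OF u, of det] by (simp add: det_mul det_adjoint det_I)
  ultimately show ?thesis by simp
qed

lemma unit_real_mult: "cnj a = a \<and> a * cnj a = 1 \<Longrightarrow> cnj b = b \<and> b * cnj b = 1 \<Longrightarrow>
   cnj (a * b) = a * b \<and> (a * b) * cnj (a * b) = (1::complex)"
  by (simp add: algebra_simps) (metis mult.assoc mult_1_right)

theorem theorem2p4:
  fixes X :: "'a topology" and U :: "'a \<Rightarrow> complex^'n^'n"
  assumes "hyperstonean X"
    and "unitary_in X U"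
  shows "(\<exists>R1 R2 R3 R4. symmetry_in X R1 \<and> symmetry_in X R2 \<and>
            symmetry_in X R3 \<and> symmetry_in X R4 \<and>
            (\<forall>x\<in>topspace X. U x = R1 x ** R2 x ** R3 x ** R4 x))
         \<longleftrightarrow> center_symmetry X (det_c U)"
proof -
  have st: "stonean_space X" using assms(1) unfolding hyperstonean_def by auto
  have Uc: "continuous_map X euclidean U" and Uu: "\<And>x. x \<in> topspace X \<Longrightarrow> mat_unitary (U x)"
    using assms(2) unfolding unitary_in_def cont_mat_fun_def by auto
  have detc: "continuous_map X euclidean (det_c U)"
  proof -
    have "continuous_map euclidean euclidean (det :: complex^'n^'n \<Rightarrow> complex)"
      unfolding continuous_map_iff_continuous2 det_def by (intro continuous_intros)
    from continuous_map_compose[OF Uc this] show ?thesis unfolding det_c_def o_def .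
  qed
  show ?thesis
  proof
    assume "\<exists>R1 R2 R3 R4. symmetry_in X R1 \<and> symmetry_in X R2 \<and>
            symmetry_in X R3 \<and> symmetry_in X R4 \<and>
            (\<forall>x\<in>topspace X. U x = R1 x ** R2 x ** R3 x ** R4 x)"
    then obtain R1 R2 R3 R4 where R: "symmetry_in X R1" "symmetry_in X R2"
            "symmetry_in X R3" "symmetry_in X R4"
            and UR: "\<forall>x\<in>topspace X. U x = R1 x ** R2 x ** R3 x ** R4 x" by blast
    show "center_symmetry X (det_c U)"
      unfolding center_symmetry_def
    proof (rule conjI[OF detc], intro ballI)
      fix x assume x: "x \<in> topspace X"
      have dcx: "det_c U x = det (R1 x) * det (R2 x) * det (R3 x) * det (R4 x)"
        unfolding det_c_def using UR x by (simp add: det_mul)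
      have dR: "cnj (det (Ri x)) = det (Ri x) \<and> det (Ri x) * cnj (det (Ri x)) = 1"
        if "symmetry_in X Ri" for Ri :: "'a \<Rightarrow> complex^'n^'n"
        using that x det_sym unfolding symmetry_in_def by blast
      show "cnj (det_c U x) = det_c U x \<and> det_c U x * cnj (det_c U x) = 1"
        unfolding dcx by (rule unit_real_mult[OF unit_real_mult[OF unit_real_mult[OF dR[OF R(1)] dR[OF R(2)]] dR[OF R(3)]] dR[OF R(4)]])
    qed
  next
    assume cs: "center_symmetry X (det_c U)"
    let ?S = "{R::complex^'n^'n. mat_symmetry R}"
    define K where "K = ?S \<times> ?S \<times> ?S \<times> ?S"
    define F where "F = (\<lambda>R::(complex^'n^'n) \<times> (complex^'n^'n) \<times> (complex^'n^'n) \<times> (complex^'n^'n).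
        fst R ** fst (snd R) ** fst (snd (snd R)) ** snd (snd (snd R)))"
    define P where "P = {z \<in> topspace X \<times> K. U (fst z) = F (snd z)}"
    have cK: "compact K" unfolding K_def by (intro compact_Times compact_sym)
    have Fc: "continuous_map euclidean euclidean F"
      unfolding continuous_map_iff_continuous2 F_def
      by (intro cont_mmult continuous_intros)
    let ?Y = "prod_topology X (euclidean :: ((complex^'n^'n) \<times> (complex^'n^'n) \<times> (complex^'n^'n) \<times> (complex^'n^'n)) topology)"
    have Peq: "P = {z \<in> topspace ?Y. snd z \<in> K} \<inter> {z \<in> topspace ?Y. U (fst z) = F (snd z)}"
      unfolding P_def by auto
    have Pc: "closedin ?Y P"
      unfolding Peq
    proof (intro closedin_Int)
      show "closedin ?Y {z \<in> topspace ?Y. snd z \<in> K}"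
        by (rule closedin_continuous_map_preimage[OF continuous_map_snd])
           (simp add: closed_closedin[symmetric] compact_imp_closed cK)
      have c1: "continuous_map ?Y euclidean (\<lambda>z. U (fst z))"
        using continuous_map_compose[OF continuous_map_fst Uc] unfolding o_def .
      have c2: "continuous_map ?Y euclidean (\<lambda>z. F (snd z))"
        using continuous_map_compose[OF continuous_map_snd Fc] unfolding o_def .
      show "closedin ?Y {z \<in> topspace ?Y. U (fst z) = F (snd z)}"
        by (rule closedin_continuous_maps_eq[OF Hausdorff_space_euclidean c1 c2])
    qed
    have PK: "P \<subseteq> topspace X \<times> K" unfolding P_def by auto
    have Pex: "\<forall>x\<in>topspace X. \<exists>k. (x,k) \<in> P"
    proof
      fix x assume x: "x \<in> topspace X"
      have "cnj (det (U x)) = det (U x) \<and> det (U x) * cnj (det (U x)) = 1"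
        using cs x unfolding center_symmetry_def det_c_def by auto
      then obtain R1 R2 R3 R4 where "mat_symmetry R1" "mat_symmetry R2" "mat_symmetry R3" "mat_symmetry R4"
           "U x = R1 ** R2 ** R3 ** R4"
        using pointwise_factor[OF Uu[OF x]] by blast
      then have "(x, (R1, R2, R3, R4)) \<in> P" unfolding P_def K_def F_def using x by auto
      then show "\<exists>k. (x,k) \<in> P" by blast
    qed
    obtain g where gc: "continuous_map X euclidean g" and gP: "\<forall>x\<in>topspace X. (x, g x) \<in> P"
      using gleason_selection[OF st cK Pc PK Pex] by blast
    have cm: "continuous_map X euclidean (\<lambda>x. h (g x))" if "continuous_on UNIV h" for h :: "_ \<Rightarrow> complex^'n^'n"
      using continuous_map_compose[OF gc that[unfolded continuous_map_iff_continuous2[symmetric]]]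
      unfolding o_def .
    define R1 where "R1 = (\<lambda>x. fst (g x))"
    define R2 where "R2 = (\<lambda>x. fst (snd (g x)))"
    define R3 where "R3 = (\<lambda>x. fst (snd (snd (g x))))"
    define R4 where "R4 = (\<lambda>x. snd (snd (snd (g x))))"
    have gK: "g x \<in> K" "U x = F (g x)" if "x \<in> topspace X" for x using gP that unfolding P_def by auto
    show "\<exists>R1 R2 R3 R4. symmetry_in X R1 \<and> symmetry_in X R2 \<and>
            symmetry_in X R3 \<and> symmetry_in X R4 \<and>
            (\<forall>x\<in>topspace X. U x = R1 x ** R2 x ** R3 x ** R4 x)"
    proof (rule exI[of _ R1], rule exI[of _ R2], rule exI[of _ R3], rule exI[of _ R4], intro conjI ballI)
      show "symmetry_in X R1" unfolding symmetry_in_def cont_mat_fun_def R1_def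
      proof
        show "continuous_map X euclidean (\<lambda>x. fst (g x))" by (rule cm) (intro continuous_intros)
        show "\<forall>x\<in>topspace X. mat_symmetry (fst (g x))" using gK(1) unfolding K_def by (auto simp: mem_Times_iff)
      qed
      show "symmetry_in X R2" unfolding symmetry_in_def cont_mat_fun_def R2_def
      proof
        show "continuous_map X euclidean (\<lambda>x. fst (snd (g x)))" by (rule cm) (intro continuous_intros)
        show "\<forall>x\<in>topspace X. mat_symmetry (fst (snd (g x)))" using gK(1) unfolding K_def by (auto simp: mem_Times_iff)
      qed
      show "symmetry_in X R3" unfolding symmetry_in_def cont_mat_fun_def R3_def
      proof
        show "continuous_map X euclidean (\<lambda>x. fst (snd (snd (g x))))" by (rule cm) (intro continuous_intros)
        show "\<forall>x\<in>topspace X. mat_symmetry (fst (snd (snd (g x))))" using gK(1) unfolding K_def by (auto simp: mem_Times_iff)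
      qed
      show "symmetry_in X R4" unfolding symmetry_in_def cont_mat_fun_def R4_def
      proof
        show "continuous_map X euclidean (\<lambda>x. snd (snd (snd (g x))))" by (rule cm) (intro continuous_intros)
        show "\<forall>x\<in>topspace X. mat_symmetry (snd (snd (snd (g x))))" using gK(1) unfolding K_def by (auto simp: mem_Times_iff)
      qed
      show "U x = R1 x ** R2 x ** R3 x ** R4 x" if "x \<in> topspace X" for x
        using gK(2)[OF that] unfolding F_def R1_def R2_def R3_def R4_def .
    qed
  qed
qed


end
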